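(* Let $\mathbb M^{n+1}$ be Minkowski space with form $\langle-,-\rangle$ of signature $-+\dots+$, let $c>0$, and let $\mathcal K^c=\{x\in\mathbb M^{n+1}:\langle x,x\rangle=-c^2,\ x \text{ future-oriented}\}$ with the Riemannian metric induced by $\langle-,-\rangle$ (a hyperbolic space of curvature $-1/c^2$), so that $T_p\mathcal K^c=p^\perp$ with the inner product $\langle-,-\rangle|_{p^\perp}$. Fix $p\in\mathcal K^c$. For $w\in T_p\mathcal K^c$ put $v(w):=c\tanh(|w|/c)\,\frac{w}{|w|}$ ($v(0)=0$); this is a bijection from $T_p\mathcal K^c$ onto the open ball $\mathcal V_p=\{u\in p^\perp:\langle u,u\rangle<c^2\}$. For $w_1,w_2\in T_p\mathcal K^c$, let $q:=\exp_p w_1$, let $w_2'\in T_q\mathcal K^c$ be the parallel transport of $w_2$ along the geodesic segment from $p$ to $q$, let $r:=\exp_q w_2'$, and define $w_1\oplus w_2:=\exp_p^{-1}r$. For $v_1,v_2\in\mathcal V_p$ with $v_i=v(w_i)$ define $v_1\oplus v_2:=v(w_1\oplus w_2)$. Then $v_1\oplus v_2$ equals the Einstein relativistic velocity sum $$v_1\oplus v_2=\frac{1}{1+\frac{\langle v_1,v_2\rangle}{c^2}}\left(v_1+\frac{v_2}{\gamma_{v_1}}+\frac{1}{c^2}\,\frac{\gamma_{v_1}}{1+\gamma_{v_1}}\langle v_1,v_2\rangle\, v_1\right),\qquad \gamma_{v_1}=\Big(1-\frac{\langle v_1,v_1\rangle}{c^2}\Big)^{-1/2}.$$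
   Context: $\exp$ denotes the Riemannian exponential map of $\mathcal K^c$ and $|w|=\sqrt{\langle w,w\rangle}$ for $w\in p^\perp$. The velocity $v(w)$ is the relative velocity (as measured by $p$) of the inertial observer $\exp_p w$; the Einstein sum $v_1\oplus v_2$ is the velocity, relative to $p$, of an object moving with velocity $v_2$ relative to a frame that moves with velocity $v_1$ relative to $p$ (frames related by a pure boost). *)

theory Defs
  imports "HOL-Analysis.Analysis"
begin

text \<open>Minkowski space M^{n+1} is modelled as real \<times> 'a, with 'a an n-dimensional
Euclidean space; the first component is the time coordinate.\<close>

definition mink :: "real \<times> 'a::euclidean_space \<Rightarrow> real \<times> 'a \<Rightarrow> real" where
  "mink x y = - fst x * fst y + snd x \<bullet> snd y"

definition mnorm :: "real \<times> 'a::euclidean_space \<Rightarrow> real" where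
  "mnorm w = sqrt (mink w w)"

definition hypK :: "real \<Rightarrow> (real \<times> 'a::euclidean_space) set" where
  "hypK c = {x. mink x x = - (c^2) \<and> fst x > 0}"

definition tangent :: "real \<times> 'a::euclidean_space \<Rightarrow> (real \<times> 'a) set" where
  "tangent p = {w. mink p w = 0}"

text \<open>Geodesics of K^c as a (spacelike) submanifold of Minkowski space: curves in K^c
whose ambient acceleration is normal to K^c, i.e. lies in span of the position.\<close>
definition geodesic :: "real \<Rightarrow> (real \<Rightarrow> real \<times> 'a::euclidean_space) \<Rightarrow> (real \<Rightarrow> real \<times> 'a) \<Rightarrow> bool" where
  "geodesic c \<gamma> \<gamma>' \<longleftrightarrow> (\<forall>t. \<gamma> t \<in> hypK c \<and> (\<gamma> has_vector_derivative \<gamma>' t) (at t)) \<and>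
     (\<exists>a. \<forall>t. (\<gamma>' has_vector_derivative a t) (at t) \<and> (\<exists>k. a t = k *\<^sub>R \<gamma> t))"

definition expK :: "real \<Rightarrow> real \<times> 'a::euclidean_space \<Rightarrow> real \<times> 'a \<Rightarrow> real \<times> 'a" where
  "expK c p w = (THE q. \<exists>\<gamma> \<gamma>'. geodesic c \<gamma> \<gamma>' \<and> \<gamma> 0 = p \<and> \<gamma>' 0 = w \<and> \<gamma> 1 = q)"

text \<open>Parallel transport of u along the geodesic t \<mapsto> exp_p (t w), from t=0 to t=1,
for the induced Levi-Civita connection: a tangent vector field along the geodesic whose
ambient derivative is normal to K^c.\<close>
definition ptransp :: "real \<Rightarrow> real \<times> 'a::euclidean_space \<Rightarrow> real \<times> 'a \<Rightarrow> real \<times> 'a \<Rightarrow> real \<times> 'a" where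
  "ptransp c p w u = (THE u'. \<exists>\<gamma> \<gamma>' V. geodesic c \<gamma> \<gamma>' \<and> \<gamma> 0 = p \<and> \<gamma>' 0 = w \<and>
      V 0 = u \<and> (\<forall>t. V t \<in> tangent (\<gamma> t)) \<and>
      (\<exists>V'. \<forall>t. (V has_vector_derivative V' t) (at t) \<and> (\<exists>k. V' t = k *\<^sub>R \<gamma> t)) \<and>
      V 1 = u')"

definition oplusT :: "real \<Rightarrow> real \<times> 'a::euclidean_space \<Rightarrow> real \<times> 'a \<Rightarrow> real \<times> 'a \<Rightarrow> real \<times> 'a" where
  "oplusT c p w1 w2 =
     (let q = expK c p w1; w2' = ptransp c p w1 w2; r = expK c q w2'
      in THE w. w \<in> tangent p \<and> expK c p w = r)"

definition vel :: "real \<Rightarrow> real \<times> 'a::euclidean_space \<Rightarrow> real \<times> 'a" where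
  "vel c w = (if w = 0 then 0 else (c * tanh (mnorm w / c) / mnorm w) *\<^sub>R w)"

definition lorentz_gamma :: "real \<Rightarrow> real \<times> 'a::euclidean_space \<Rightarrow> real" where
  "lorentz_gamma c v = 1 / sqrt (1 - mink v v / c^2)"

definition einstein_add :: "real \<Rightarrow> real \<times> 'a::euclidean_space \<Rightarrow> real \<times> 'a \<Rightarrow> real \<times> 'a" where
  "einstein_add c v1 v2 =
     (1 / (1 + mink v1 v2 / c^2)) *\<^sub>R
       (v1 + (1 / lorentz_gamma c v1) *\<^sub>R v2 +
        (1 / c^2 * (lorentz_gamma c v1 / (1 + lorentz_gamma c v1)) * mink v1 v2) *\<^sub>R v1)"

end

theory Submission
  imports Defs
begin


lemma mink_sym: "mink x y = mink y x"
  by (simp add: mink_def inner_commute)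
lemma mink_add_left[simp]: "mink (x + y) z = mink x z + mink y z"
  by (simp add: mink_def algebra_simps inner_add_left)
lemma mink_add_right[simp]: "mink z (x + y) = mink z x + mink z y"
  by (simp add: mink_def algebra_simps inner_add_right)
lemma mink_diff_left[simp]: "mink (x - y) z = mink x z - mink y z"
  by (simp add: mink_def algebra_simps inner_diff_left)
lemma mink_diff_right[simp]: "mink z (x - y) = mink z x - mink z y"
  by (simp add: mink_def algebra_simps inner_diff_right)
lemma mink_scaleR_left[simp]: "mink (a *\<^sub>R x) z = a * mink x z"
  by (simp add: mink_def algebra_simps)
lemma mink_scaleR_right[simp]: "mink z (a *\<^sub>R x) = a * mink z x"
  by (simp add: mink_def algebra_simps)
lemma mink_zero_left[simp]: "mink 0 z = 0" by (simp add: mink_def)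
lemma mink_zero_right[simp]: "mink z 0 = 0" by (simp add: mink_def)
lemma mink_minus_left[simp]: "mink (- x) z = - mink x z" by (simp add: mink_def)
lemma mink_minus_right[simp]: "mink z (- x) = - mink z x" by (simp add: mink_def)

lemma bounded_bilinear_mink: "bounded_bilinear (mink :: real \<times> 'a::euclidean_space \<Rightarrow> _ \<Rightarrow> real)"
proof (rule bounded_bilinear.intro)
  show "\<exists>K. \<forall>x y :: real \<times> 'a. norm (mink x y) \<le> norm x * norm y * K"
  proof (intro exI allI)
    fix x y :: "real \<times> 'a"
    have "norm (mink x y) \<le> \<bar>fst x\<bar> * \<bar>fst y\<bar> + norm (snd x) * norm (snd y)"
      unfolding mink_def real_norm_def using Cauchy_Schwarz_ineq2[of "snd x" "snd y"] abs_mult[of "fst x" "fst y"]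
      by arith
    also have "\<dots> \<le> norm x * norm y + norm x * norm y"
      using norm_fst_le[of "fst x" "snd x"] norm_fst_le[of "fst y" "snd y"] norm_snd_le[of "snd x" "fst x"] norm_snd_le[of "snd y" "fst y"]
      by (intro add_mono mult_mono) (auto simp: real_norm_def)
    finally show "norm (mink x y) \<le> norm x * norm y * 2" by simp
  qed
qed (auto simp: mink_def algebra_simps inner_add_left inner_add_right)

lemma mink_deriv:
  fixes f g :: "real \<Rightarrow> real \<times> 'a::euclidean_space"
  assumes "(f has_vector_derivative f') (at t)" "(g has_vector_derivative g') (at t)"
  shows "((\<lambda>t. mink (f t) (g t)) has_real_derivative (mink (f t) g' + mink f' (g t))) (at t)"
  using bounded_bilinear.has_vector_derivative[OF bounded_bilinear_mink assms]
  by (simp add: has_real_derivative_iff_has_vector_derivative)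

lemma real_const_deriv:
  fixes f :: "real \<Rightarrow> real"
  assumes "\<And>t. (f has_real_derivative 0) (at t)"
  shows "f t = f s"
proof -
  obtain k where "\<forall>x\<in>UNIV. f x = k"
    using has_field_derivative_zero_constant[of UNIV f] assms by auto
  then show ?thesis by auto
qed

lemma vec_const_deriv:
  fixes f :: "real \<Rightarrow> 'b::real_normed_vector"
  assumes "\<And>t. (f has_vector_derivative 0) (at t)"
  shows "f t = f s"
proof -
  obtain k where "\<And>x. x \<in> UNIV \<Longrightarrow> f x = k"
    using has_vector_derivative_zero_constant[of UNIV f] assms by auto
  then show ?thesis by auto
qed

lemma deriv_of_const:
  fixes f :: "real \<Rightarrow> real"
  assumes "(f has_real_derivative D) (at t)" "\<And>t. f t = k"
  shows "D = 0"
proof -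
  have "f = (\<lambda>t. k)" using assms(2) by auto
  then have "(f has_real_derivative 0) (at t)" by simp
  then show ?thesis using assms(1) DERIV_unique by blast
qed



lemma spacelike_orth:
  fixes p w :: "real \<times> 'a::euclidean_space"
  assumes "mink p p < 0" "mink p w = 0"
  shows "mink w w \<ge> 0 \<and> (mink w w = 0 \<longrightarrow> w = 0)"
proof -
  obtain p0 P where p: "p = (p0, P)" by (cases p)
  obtain w0 W where w: "w = (w0, W)" by (cases w)
  define A where "A = P \<bullet> P"
  define B where "B = W \<bullet> W"
  have A0: "A \<ge> 0" "B \<ge> 0" by (auto simp: A_def B_def)
  have h1: "A < p0^2" using assms(1) by (simp add: p mink_def A_def power2_eq_square)
  have h2: "P \<bullet> W = p0 * w0" using assms(2) by (simp add: p w mink_def)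
  have cs: "(p0 * w0)^2 \<le> A * B" using Cauchy_Schwarz_ineq[of P W] h2 by (simp add: A_def B_def)
  have le: "w0^2 \<le> B"
  proof (rule ccontr)
    assume "\<not> w0^2 \<le> B"
    then have "B < w0^2" by simp
    then have "w0^2 > 0" using A0 by linarith
    have "A * B \<le> A * w0^2" using \<open>B < w0^2\<close> A0 by (simp add: mult_left_mono)
    also have "\<dots> < p0^2 * w0^2" using h1 \<open>w0^2 > 0\<close> by (simp add: mult_strict_right_mono)
    finally show False using cs by (simp add: power_mult_distrib)
  qed
  have mw: "mink w w = B - w0^2" by (simp add: w mink_def B_def power2_eq_square)
  show ?thesis
  proof
    show "mink w w \<ge> 0" using mw le by simp
    show "mink w w = 0 \<longrightarrow> w = 0"
    proof
      assume "mink w w = 0"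
      then have Bw: "B = w0^2" using mw by simp
      have "p0^2 * w0^2 \<le> A * w0^2" using cs Bw by (simp add: power_mult_distrib)
      then have "(p0^2 - A) * w0^2 \<le> 0" by (simp add: algebra_simps)
      moreover have "p0^2 - A > 0" using h1 by simp
      ultimately have "w0^2 \<le> 0" by (simp add: mult_le_0_iff)
      then have "w0 = 0" by simp
      then have "W = 0" using Bw by (simp add: B_def)
      then show "w = 0" using \<open>w0 = 0\<close> by (simp add: w zero_prod_def)
    qed
  qed
qed

lemma hypK_timelike: "c > 0 \<Longrightarrow> p \<in> hypK c \<Longrightarrow> mink p p < 0"
  by (simp add: hypK_def)

lemma tangent_nonneg:
  "c > 0 \<Longrightarrow> p \<in> hypK c \<Longrightarrow> w \<in> tangent p \<Longrightarrow> mink w w \<ge> 0"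
  using spacelike_orth[of p w] by (simp add: hypK_def tangent_def)

lemma tangent_zero:
  "c > 0 \<Longrightarrow> p \<in> hypK c \<Longrightarrow> w \<in> tangent p \<Longrightarrow> mink w w = 0 \<Longrightarrow> w = 0"
  using spacelike_orth[of p w] by (simp add: hypK_def tangent_def)

lemma reverse_cs:
  fixes p r :: "real \<times> 'a::euclidean_space"
  assumes "c > 0" "p \<in> hypK c" "r \<in> hypK c"
  shows "- mink r p \<ge> c^2"
proof -
  obtain p0 P where p: "p = (p0, P)" by (cases p)
  obtain r0 R where r: "r = (r0, R)" by (cases r)
  define A where "A = R \<bullet> R"
  define B where "B = P \<bullet> P"
  define X where "X = R \<bullet> P"
  have A0: "A \<ge> 0" "B \<ge> 0" by (auto simp: A_def B_def)
  have pp: "p0^2 = c^2 + B" "p0 > 0" using assms(2) by (auto simp: hypK_def p mink_def B_def power2_eq_square)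
  have rr: "r0^2 = c^2 + A" "r0 > 0" using assms(3) by (auto simp: hypK_def r mink_def A_def power2_eq_square)
  have cs: "X^2 \<le> A * B" using Cauchy_Schwarz_ineq[of R P] by (simp add: A_def B_def X_def)
  have "0 \<le> (R - P) \<bullet> (R - P)" by simp
  then have am: "2 * X \<le> A + B" by (simp add: A_def B_def X_def inner_diff_left inner_diff_right inner_commute)
  have goal: "c^2 + X \<le> r0 * p0"
  proof (cases "c^2 + X \<le> 0")
    case True then show ?thesis using pp rr by (smt (verit) mult_pos_pos)
  next
    case False
    have "(c^2 + X)^2 = c^2*c^2 + 2*c^2*X + X^2" by (simp add: power2_eq_square algebra_simps)
    also have "\<dots> \<le> c^2*c^2 + c^2*(A+B) + A*B"
      using cs am mult_left_mono[OF am, of "c^2"] by (simp add: algebra_simps)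
    also have "\<dots> = (r0 * p0)^2" using pp rr by (simp add: power_mult_distrib algebra_simps)
    finally have "(c^2 + X)^2 \<le> (r0 * p0)^2" .
    then show ?thesis by (rule power2_le_imp_le) (use pp rr in simp)
  qed
  then show ?thesis by (simp add: p r mink_def X_def inner_commute)
qed



definition lam :: "real \<Rightarrow> real \<times> 'a::euclidean_space \<Rightarrow> real" where
  "lam c w = mnorm w / c"

definition geoG :: "real \<Rightarrow> real \<times> 'a::euclidean_space \<Rightarrow> real \<times> 'a \<Rightarrow> real \<Rightarrow> real \<times> 'a" where
  "geoG c p w t = cosh (lam c w * t) *\<^sub>R p + (sinh (lam c w * t) / lam c w) *\<^sub>R w"

definition geoD :: "real \<Rightarrow> real \<times> 'a::euclidean_space \<Rightarrow> real \<times> 'a \<Rightarrow> real \<Rightarrow> real \<times> 'a" where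
  "geoD c p w t = (lam c w * sinh (lam c w * t)) *\<^sub>R p + cosh (lam c w * t) *\<^sub>R w"

lemma lam_facts:
  fixes p w :: "real \<times> 'a::euclidean_space"
  assumes "c > 0" "p \<in> hypK c" "w \<in> tangent p"
  shows "lam c w \<ge> 0" "mink w w = (lam c w)^2 * c^2" "lam c w = 0 \<longleftrightarrow> w = 0"
proof -
  have nn: "mink w w \<ge> 0" using tangent_nonneg assms by blast
  show "lam c w \<ge> 0" using nn assms(1) by (simp add: lam_def mnorm_def)
  show "mink w w = (lam c w)^2 * c^2" using nn assms(1)
    by (simp add: lam_def mnorm_def power_divide)
  show "lam c w = 0 \<longleftrightarrow> w = 0"
    using tangent_zero[OF assms] assms(1) by (auto simp: lam_def mnorm_def)
qed

lemma lam_zero[simp]: "lam c 0 = 0" by (simp add: lam_def mnorm_def)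

lemma geoG_zero[simp]: "geoG c p 0 = (\<lambda>t. p)" by (rule ext) (simp add: geoG_def)
lemma geoD_zero[simp]: "geoD c p 0 = (\<lambda>t. 0)" by (rule ext) (simp add: geoD_def)

lemma abs_sinh_lt_cosh: "\<bar>sinh (x::real)\<bar> < cosh x"
proof -
  have "(abs (sinh x))^2 < (cosh x)^2" using cosh_square_eq[of x] by simp
  then show ?thesis using cosh_real_pos[of x] by (smt (verit) power2_le_imp_le)
qed

lemma time_bound:
  fixes p w :: "real \<times> 'a::euclidean_space"
  assumes "c > 0" "p \<in> hypK c" "w \<in> tangent p"
  shows "c^2 * (fst w)^2 \<le> mink w w * (fst p)^2"
proof -
  obtain p0 P where p: "p = (p0, P)" by (cases p)
  obtain w0 W where w: "w = (w0, W)" by (cases w)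
  define A where "A = P \<bullet> P"
  define B where "B = W \<bullet> W"
  have A0: "A \<ge> 0" "B \<ge> 0" by (auto simp: A_def B_def)
  have pp: "p0^2 = c^2 + A" using assms(2) by (auto simp: hypK_def p mink_def A_def power2_eq_square)
  have h2: "P \<bullet> W = p0 * w0" using assms(3) by (simp add: tangent_def p w mink_def)
  have cs: "(p0 * w0)^2 \<le> A * B" using Cauchy_Schwarz_ineq[of P W] h2 by (simp add: A_def B_def)
  have mw: "mink w w = B - w0^2" by (simp add: w mink_def B_def power2_eq_square)
  have le: "w0^2 \<le> B" using tangent_nonneg[OF assms] mw by simp
  have "c^2 * w0^2 \<le> (B - w0^2) * (c^2 + A)"
  proof -
    have "(c^2 + A) * w0^2 \<le> A * B" using cs pp by (simp add: power_mult_distrib)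
    moreover have "0 \<le> c^2 * (B - w0^2)" using le by simp
    ultimately show ?thesis by (simp add: algebra_simps)
  qed
  then show ?thesis using pp mw by (simp add: p w)
qed

lemma geoG_hyp:
  fixes p w :: "real \<times> 'a::euclidean_space"
  assumes "c > 0" "p \<in> hypK c" "w \<in> tangent p"
  shows "geoG c p w t \<in> hypK c"
proof (cases "w = 0")
  case True then show ?thesis using assms by (simp add: geoG_def)
next
  case False
  define L where "L = lam c w"
  have L: "L > 0" "mink w w = L^2 * c^2" using lam_facts[OF assms] False by (auto simp: L_def)
  have pp: "mink p p = - (c^2)" "fst p > 0" "mink p w = 0" using assms by (auto simp: hypK_def tangent_def)
  have "mink (geoG c p w t) (geoG c p w t) = -(c^2) * ((cosh (L*t))^2 - (sinh (L*t))^2)"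
    using L pp by (simp add: geoG_def L_def[symmetric] mink_sym[of w p] power2_eq_square field_simps)
  then have m: "mink (geoG c p w t) (geoG c p w t) = -(c^2)" by (simp add: cosh_square_eq)
  have tb: "c^2 * (fst w)^2 \<le> L^2 * c^2 * (fst p)^2" using time_bound[OF assms] L by simp
  then have "(fst w)^2 \<le> (L * fst p)^2" using assms(1) by (simp add: power_mult_distrib algebra_simps)
  then have aw: "\<bar>fst w\<bar> \<le> L * fst p" using power2_le_imp_le[of "\<bar>fst w\<bar>" "L * fst p"] L pp by simp
  have "\<bar>sinh (L*t) / L * fst w\<bar> = \<bar>sinh (L*t)\<bar> / L * \<bar>fst w\<bar>" using L by (simp add: abs_mult)
  also have "\<dots> \<le> \<bar>sinh (L*t)\<bar> / L * (L * fst p)" using aw L by (intro mult_left_mono) auto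
  also have "\<dots> = \<bar>sinh (L*t)\<bar> * fst p" using L by simp
  also have "\<dots> < cosh (L*t) * fst p" using abs_sinh_lt_cosh pp by simp
  finally have lt: "\<bar>sinh (L*t) / L * fst w\<bar> < cosh (L*t) * fst p" .
  have "fst (geoG c p w t) = cosh (L*t) * fst p + sinh (L*t) / L * fst w"
    by (simp add: geoG_def L_def[symmetric])
  then have "fst (geoG c p w t) > 0" using lt by arith
  then show ?thesis using m by (simp add: hypK_def)
qed

lemma geoG_deriv:
  fixes p w :: "real \<times> 'a::euclidean_space"
  assumes "c > 0" "p \<in> hypK c" "w \<in> tangent p"
  shows "(geoG c p w has_vector_derivative geoD c p w t) (at t)"
proof (cases "w = 0")
  case True then show ?thesis by (simp add: geoG_def geoD_def)
next
  case False
  define L where "L = lam c w"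
  have L: "L > 0" using lam_facts[OF assms] False by (auto simp: L_def)
  show ?thesis unfolding geoG_def geoD_def L_def[symmetric]
    apply (rule has_vector_derivative_eq_rhs)
     apply (use L in \<open>auto intro!: derivative_eq_intros\<close>)[1]
  proof -
    have "(cosh (L * t) * (0 * t + 1 * L) * L - sinh (L * t) * 0) / (L * L) = cosh (L*t)"
      using L by simp
    then show "cosh (L * t) *\<^sub>R 0 + (sinh (L * t) * (0 * t + 1 * L)) *\<^sub>R p +
     ((sinh (L * t) / L) *\<^sub>R 0 +
      ((cosh (L * t) * (0 * t + 1 * L) * L - sinh (L * t) * 0) / (L * L)) *\<^sub>R w) =
     (L * sinh (L * t)) *\<^sub>R p + cosh (L * t) *\<^sub>R w"
      by (simp add: algebra_simps)
  qed
qed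

lemma geoD_deriv:
  fixes p w :: "real \<times> 'a::euclidean_space"
  assumes "c > 0" "p \<in> hypK c" "w \<in> tangent p"
  shows "(geoD c p w has_vector_derivative (lam c w)^2 *\<^sub>R geoG c p w t) (at t)"
proof (cases "w = 0")
  case True then show ?thesis by (simp add: geoG_def geoD_def)
next
  case False
  define L where "L = lam c w"
  have L: "L > 0" using lam_facts[OF assms] False by (auto simp: L_def)
  show ?thesis unfolding geoG_def geoD_def L_def[symmetric]
    apply (rule has_vector_derivative_eq_rhs)
     apply (auto intro!: derivative_eq_intros)[1]
    using L by (simp add: algebra_simps power2_eq_square)
qed

lemma geo_exists:
  fixes p w :: "real \<times> 'a::euclidean_space"
  assumes "c > 0" "p \<in> hypK c" "w \<in> tangent p"
  shows "geodesic c (geoG c p w) (geoD c p w)"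
  unfolding geodesic_def
  apply (intro conjI allI exI[of _ "\<lambda>t. (lam c w)^2 *\<^sub>R geoG c p w t"])
  using geoG_hyp[OF assms] geoG_deriv[OF assms] geoD_deriv[OF assms] by auto

lemma geo_init: "geoG c p w 0 = p" "geoD c p w 0 = w"
  by (simp_all add: geoG_def geoD_def)



lemma comb1:
  fixes p w :: "'a::real_vector"
  assumes "L \<noteq> 0"
  shows "(C + S) *\<^sub>R (w + L *\<^sub>R p) - (C - S) *\<^sub>R (w - L *\<^sub>R p) = L *\<^sub>R (C *\<^sub>R p + (S/L) *\<^sub>R w) + L *\<^sub>R (C *\<^sub>R p + (S/L) *\<^sub>R w)"
  using assms by (simp add: scaleR_add_left scaleR_diff_left scaleR_add_right scaleR_diff_right scaleR_scaleR algebra_simps)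
lemma comb2:
  fixes p w :: "'a::real_vector"
  shows "(C + S) *\<^sub>R (w + L *\<^sub>R p) + (C - S) *\<^sub>R (w - L *\<^sub>R p) = ((L * S) *\<^sub>R p + C *\<^sub>R w) + ((L * S) *\<^sub>R p + C *\<^sub>R w)"
  by (simp add: scaleR_add_left scaleR_diff_left scaleR_add_right scaleR_diff_right scaleR_scaleR algebra_simps)
lemma twice: fixes x y :: "'a::real_vector" shows "x + x = y + y \<Longrightarrow> x = y"
  by (metis scaleR_2 scaleR_cancel_left zero_neq_numeral)

lemma geo_unique:
  fixes p w :: "real \<times> 'a::euclidean_space"
  assumes c: "c > 0" and p: "p \<in> hypK c" and w: "w \<in> tangent p"
    and g: "geodesic c \<gamma> \<gamma>'" and g0: "\<gamma> 0 = p" "\<gamma>' 0 = w"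
  shows "\<gamma> t = geoG c p w t \<and> \<gamma>' t = geoD c p w t"
proof -
  from g have dg: "\<And>t. (\<gamma> has_vector_derivative \<gamma>' t) (at t)"
    and hg: "\<And>t. \<gamma> t \<in> hypK c" by (auto simp: geodesic_def)
  from g obtain a where a: "\<forall>t. (\<gamma>' has_vector_derivative a t) (at t) \<and> (\<exists>k. a t = k *\<^sub>R \<gamma> t)"
    by (auto simp: geodesic_def)
  then obtain k where k: "\<And>t. a t = k t *\<^sub>R \<gamma> t" by metis
  have da: "\<And>t. (\<gamma>' has_vector_derivative k t *\<^sub>R \<gamma> t) (at t)" using a k by metis
  have hh: "\<And>t. mink (\<gamma> t) (\<gamma> t) = -(c^2)" using hg by (simp add: hypK_def)
  have s1: "mink (\<gamma> t) (\<gamma>' t) = 0" for t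
  proof -
    have "mink (\<gamma> t) (\<gamma>' t) + mink (\<gamma>' t) (\<gamma> t) = 0"
      by (rule deriv_of_const[OF mink_deriv[OF dg dg] hh])
    then show ?thesis by (simp add: mink_sym)
  qed
  have s2: "k t * -(c^2) + mink (\<gamma>' t) (\<gamma>' t) = 0" for t
  proof -
    have "mink (\<gamma> t) (k t *\<^sub>R \<gamma> t) + mink (\<gamma>' t) (\<gamma>' t) = 0"
      by (rule deriv_of_const[OF mink_deriv[OF dg da] s1])
    then show ?thesis using hh by simp
  qed
  have s3: "mink (\<gamma>' t) (\<gamma>' t) = mink w w" for t
  proof -
    have "mink (\<gamma>' t) (\<gamma>' t) = mink (\<gamma>' 0) (\<gamma>' 0)"
    proof (rule real_const_deriv[where f="\<lambda>t. mink (\<gamma>' t) (\<gamma>' t)"])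
      fix t
      have "((\<lambda>t. mink (\<gamma>' t) (\<gamma>' t)) has_real_derivative
          mink (\<gamma>' t) (k t *\<^sub>R \<gamma> t) + mink (k t *\<^sub>R \<gamma> t) (\<gamma>' t)) (at t)"
        by (rule mink_deriv; rule da)
      moreover have "mink (\<gamma>' t) (k t *\<^sub>R \<gamma> t) + mink (k t *\<^sub>R \<gamma> t) (\<gamma>' t) = 0"
        using s1[of t] by (simp add: mink_sym)
      ultimately show "((\<lambda>t. mink (\<gamma>' t) (\<gamma>' t)) has_real_derivative 0) (at t)" by simp
    qed
    then show ?thesis using g0 by simp
  qed
  define L where "L = lam c w"
  have L: "L \<ge> 0" "mink w w = L^2 * c^2" "L = 0 \<longleftrightarrow> w = 0" using lam_facts[OF c p w] by (auto simp: L_def)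
  have kL: "k t = L^2" for t using s2[of t] s3[of t] L c by (simp add: field_simps)
  have da2: "\<And>t. (\<gamma>' has_vector_derivative L^2 *\<^sub>R \<gamma> t) (at t)" using da kL by simp
  show ?thesis
  proof (cases "w = 0")
    case True
    then have L0: "L = 0" using L by simp
    have g't: "\<gamma>' s = 0" for s
      using vec_const_deriv[of \<gamma>' s 0] da2 L0 g0 True by simp
    have "\<gamma> t = \<gamma> 0" using vec_const_deriv[of \<gamma> t 0] dg g't by simp
    then show ?thesis using g0 True g't by simp
  next
    case False
    then have Lp: "L > 0" using L by auto
    define u where "u t = exp (L * t) *\<^sub>R (\<gamma>' t - L *\<^sub>R \<gamma> t)" for t
    define v where "v t = exp (- (L * t)) *\<^sub>R (\<gamma>' t + L *\<^sub>R \<gamma> t)" for t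
    have du: "(u has_vector_derivative 0) (at t)" for t
      unfolding u_def
      apply (rule has_vector_derivative_eq_rhs)
       apply (rule derivative_eq_intros refl dg da2)+
      by (simp add: algebra_simps power2_eq_square)
    have dv: "(v has_vector_derivative 0) (at t)" for t
      unfolding v_def
      apply (rule has_vector_derivative_eq_rhs)
       apply (rule derivative_eq_intros refl dg da2)+
      by (simp add: algebra_simps power2_eq_square)
    have u0: "u t = w - L *\<^sub>R p" using vec_const_deriv[of u t 0, OF du] g0 by (simp add: u_def)
    have v0: "v t = w + L *\<^sub>R p" using vec_const_deriv[of v t 0, OF dv] g0 by (simp add: v_def)
    define E where "E = exp (L * t)"
    define F where "F = exp (- (L * t))"
    have EF: "E * F = 1" by (simp add: E_def F_def exp_minus field_simps)
    have E: "E = cosh (L*t) + sinh (L*t)" by (simp add: E_def cosh_plus_sinh)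
    have F: "F = cosh (L*t) - sinh (L*t)" by (simp add: F_def cosh_minus_sinh)
    have e1: "\<gamma>' t - L *\<^sub>R \<gamma> t = F *\<^sub>R (w - L *\<^sub>R p)"
    proof -
      have "F *\<^sub>R u t = \<gamma>' t - L *\<^sub>R \<gamma> t" using EF by (simp add: u_def E_def[symmetric] scaleR_scaleR mult.commute)
      then show ?thesis using u0 by simp
    qed
    have e2: "\<gamma>' t + L *\<^sub>R \<gamma> t = E *\<^sub>R (w + L *\<^sub>R p)"
    proof -
      have "E *\<^sub>R v t = \<gamma>' t + L *\<^sub>R \<gamma> t" using EF by (simp add: v_def F_def[symmetric] scaleR_scaleR mult.commute)
      then show ?thesis using v0 by simp
    qed
    have "L *\<^sub>R \<gamma> t + L *\<^sub>R \<gamma> t = (\<gamma>' t + L *\<^sub>R \<gamma> t) - (\<gamma>' t - L *\<^sub>R \<gamma> t)"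
      by (simp add: algebra_simps)
    also have "\<dots> = L *\<^sub>R geoG c p w t + L *\<^sub>R geoG c p w t"
      unfolding e1 e2 E F geoG_def L_def[symmetric] using Lp by (intro comb1) simp
    finally have "\<gamma> t = geoG c p w t" using Lp
      by (metis twice scaleR_cancel_left less_irrefl)
    note G = this
    have "\<gamma>' t + \<gamma>' t = (\<gamma>' t + L *\<^sub>R \<gamma> t) + (\<gamma>' t - L *\<^sub>R \<gamma> t)"
      by (simp add: algebra_simps)
    also have "\<dots> = geoD c p w t + geoD c p w t"
      unfolding e1 e2 E F geoD_def L_def[symmetric] by (rule comb2)
    finally have D: "\<gamma>' t = geoD c p w t" by (rule twice)
    show ?thesis using G D by simp
  qed
qed



lemma expK_eq:
  fixes p w :: "real \<times> 'a::euclidean_space"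
  assumes "c > 0" "p \<in> hypK c" "w \<in> tangent p"
  shows "expK c p w = geoG c p w 1"
  unfolding expK_def
proof (rule the_equality)
  show "\<exists>\<gamma> \<gamma>'. geodesic c \<gamma> \<gamma>' \<and> \<gamma> 0 = p \<and> \<gamma>' 0 = w \<and> \<gamma> 1 = geoG c p w 1"
    using geo_exists[OF assms] geo_init by blast
next
  fix q assume "\<exists>\<gamma> \<gamma>'. geodesic c \<gamma> \<gamma>' \<and> \<gamma> 0 = p \<and> \<gamma>' 0 = w \<and> \<gamma> 1 = q"
  then show "q = geoG c p w 1" using geo_unique[OF assms] by blast
qed

definition parfield :: "(real \<Rightarrow> real \<times> 'a::euclidean_space) \<Rightarrow> (real \<Rightarrow> real \<times> 'a) \<Rightarrow> bool" where
  "parfield \<gamma> V \<longleftrightarrow> (\<forall>t. V t \<in> tangent (\<gamma> t)) \<and>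
      (\<exists>V'. \<forall>t. (V has_vector_derivative V' t) (at t) \<and> (\<exists>k. V' t = k *\<^sub>R \<gamma> t))"

lemma parfield_norm:
  fixes \<gamma> V :: "real \<Rightarrow> real \<times> 'a::euclidean_space"
  assumes "parfield \<gamma> V"
  shows "mink (V t) (V t) = mink (V 0) (V 0)"
proof -
  from assms obtain V' where V': "\<forall>t. (V has_vector_derivative V' t) (at t) \<and> (\<exists>k. V' t = k *\<^sub>R \<gamma> t)"
    and tg: "\<And>t. mink (\<gamma> t) (V t) = 0"
    by (auto simp: parfield_def tangent_def)
  then obtain k where k: "\<And>t. V' t = k t *\<^sub>R \<gamma> t" by metis
  have dV: "\<And>t. (V has_vector_derivative k t *\<^sub>R \<gamma> t) (at t)" using V' k by metis
  show ?thesis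
  proof (rule real_const_deriv[where f="\<lambda>t. mink (V t) (V t)"])
    fix t
    have "((\<lambda>t. mink (V t) (V t)) has_real_derivative
          mink (V t) (k t *\<^sub>R \<gamma> t) + mink (k t *\<^sub>R \<gamma> t) (V t)) (at t)"
      by (rule mink_deriv; rule dV)
    moreover have "mink (V t) (k t *\<^sub>R \<gamma> t) + mink (k t *\<^sub>R \<gamma> t) (V t) = 0"
      using tg[of t] by (simp add: mink_sym)
    ultimately show "((\<lambda>t. mink (V t) (V t)) has_real_derivative 0) (at t)" by simp
  qed
qed

lemma parfield_diff:
  assumes "parfield \<gamma> V1" "parfield \<gamma> V2"
  shows "parfield \<gamma> (\<lambda>t. V1 t - V2 t)"
proof -
  from assms(1) obtain A where A: "\<forall>t. (V1 has_vector_derivative A t) (at t) \<and> (\<exists>k. A t = k *\<^sub>R \<gamma> t)"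
    and t1: "\<And>t. mink (\<gamma> t) (V1 t) = 0"
    by (auto simp: parfield_def tangent_def)
  from assms(2) obtain B where B: "\<forall>t. (V2 has_vector_derivative B t) (at t) \<and> (\<exists>k. B t = k *\<^sub>R \<gamma> t)"
    and t2: "\<And>t. mink (\<gamma> t) (V2 t) = 0"
    by (auto simp: parfield_def tangent_def)
  have "\<forall>t. ((\<lambda>t. V1 t - V2 t) has_vector_derivative A t - B t) (at t) \<and> (\<exists>k. A t - B t = k *\<^sub>R \<gamma> t)"
  proof
    fix t
    from A obtain k1 where "A t = k1 *\<^sub>R \<gamma> t" by blast
    moreover from B obtain k2 where "B t = k2 *\<^sub>R \<gamma> t" by blast
    ultimately have "A t - B t = (k1 - k2) *\<^sub>R \<gamma> t" by (simp add: scaleR_diff_left)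
    moreover have "((\<lambda>t. V1 t - V2 t) has_vector_derivative A t - B t) (at t)"
      using A B by (auto intro: derivative_intros)
    ultimately show "((\<lambda>t. V1 t - V2 t) has_vector_derivative A t - B t) (at t) \<and> (\<exists>k. A t - B t = k *\<^sub>R \<gamma> t)"
      by blast
  qed
  then show ?thesis unfolding parfield_def tangent_def using t1 t2 by auto
qed

lemma parfield_unique:
  fixes \<gamma> V1 V2 :: "real \<Rightarrow> real \<times> 'a::euclidean_space"
  assumes "c > 0" "\<And>t. \<gamma> t \<in> hypK c" "parfield \<gamma> V1" "parfield \<gamma> V2" "V1 0 = V2 0"
  shows "V1 t = V2 t"
proof -
  have pd: "parfield \<gamma> (\<lambda>t. V1 t - V2 t)" by (rule parfield_diff[OF assms(3,4)])
  have "mink (V1 t - V2 t) (V1 t - V2 t) = 0" using parfield_norm[OF pd, of t] assms(5) by simp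
  moreover have "V1 t - V2 t \<in> tangent (\<gamma> t)" using pd by (simp add: parfield_def)
  ultimately have "V1 t - V2 t = 0" using tangent_zero[OF assms(1) assms(2)[of t]] by blast
  then show ?thesis by simp
qed

definition ptV :: "real \<Rightarrow> real \<times> 'a::euclidean_space \<Rightarrow> real \<times> 'a \<Rightarrow> real \<times> 'a \<Rightarrow> real \<Rightarrow> real \<times> 'a" where
  "ptV c p w u t = u + (mink u w / mink w w) *\<^sub>R
      ((lam c w * sinh (lam c w * t)) *\<^sub>R p + (cosh (lam c w * t) - 1) *\<^sub>R w)"

lemma ptV_par:
  fixes p w u :: "real \<times> 'a::euclidean_space"
  assumes c: "c > 0" and p: "p \<in> hypK c" and w: "w \<in> tangent p" and u: "u \<in> tangent p"
  shows "parfield (geoG c p w) (ptV c p w u)"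
proof (cases "w = 0")
  case True
  have "ptV c p w u = (\<lambda>t. u)" by (rule ext) (simp add: ptV_def True)
  then show ?thesis using True u by (auto simp: parfield_def intro!: exI[of _ "\<lambda>t. 0"])
next
  case False
  define L where "L = lam c w"
  have L: "L > 0" "mink w w = L^2 * c^2" using lam_facts[OF c p w] False by (auto simp: L_def)
  have pp: "mink p p = -(c^2)" "mink p w = 0" "mink p u = 0" using p w u by (auto simp: hypK_def tangent_def)
  define m where "m = mink u w"
  have tg: "mink (geoG c p w t) (ptV c p w u t) = 0" for t
  proof -
    have "mink (geoG c p w t) (ptV c p w u t) =
       sinh (L*t) / L * m + (m / (L^2 * c^2)) * (- (c^2) * L * sinh (L*t) * cosh (L*t) + sinh (L*t) / L * (cosh (L*t) - 1) * (L^2 * c^2))"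
      using L pp c unfolding geoG_def ptV_def L_def[symmetric] m_def
      by (simp add: mink_sym[of w p] mink_sym[of w u] algebra_simps) (simp add: diff_divide_distrib)
    also have "\<dots> = 0" using L c by (simp add: field_simps power2_eq_square)
    finally show ?thesis .
  qed
  have dV: "(ptV c p w u has_vector_derivative ((m / mink w w) * L^2) *\<^sub>R geoG c p w t) (at t)" for t
    unfolding ptV_def geoG_def L_def[symmetric] m_def
    apply (rule has_vector_derivative_eq_rhs)
     apply (use L in \<open>auto intro!: derivative_eq_intros\<close>)[1]
    using L by (simp add: algebra_simps power2_eq_square)
  show ?thesis unfolding parfield_def tangent_def
    apply (intro conjI allI exI[of _ "\<lambda>t. ((m / mink w w) * L^2) *\<^sub>R geoG c p w t"])
    using tg dV by auto
qed



lemma ptV_0: "ptV c p w u 0 = u" by (simp add: ptV_def)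

lemma ptransp_eq:
  fixes p w u :: "real \<times> 'a::euclidean_space"
  assumes c: "c > 0" and p: "p \<in> hypK c" and w: "w \<in> tangent p" and u: "u \<in> tangent p"
  shows "ptransp c p w u = ptV c p w u 1"
  unfolding ptransp_def
proof (rule the_equality)
  have pf: "parfield (geoG c p w) (ptV c p w u)" by (rule ptV_par[OF c p w u])
  show "\<exists>\<gamma> \<gamma>' V. geodesic c \<gamma> \<gamma>' \<and> \<gamma> 0 = p \<and> \<gamma>' 0 = w \<and> V 0 = u \<and> (\<forall>t. V t \<in> tangent (\<gamma> t)) \<and>
      (\<exists>V'. \<forall>t. (V has_vector_derivative V' t) (at t) \<and> (\<exists>k. V' t = k *\<^sub>R \<gamma> t)) \<and> V 1 = ptV c p w u 1"
    apply (rule exI[of _ "geoG c p w"], rule exI[of _ "geoD c p w"], rule exI[of _ "ptV c p w u"])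
    using geo_exists[OF c p w] pf unfolding parfield_def by (simp add: geo_init ptV_0)
next
  fix u' assume "\<exists>\<gamma> \<gamma>' V. geodesic c \<gamma> \<gamma>' \<and> \<gamma> 0 = p \<and> \<gamma>' 0 = w \<and> V 0 = u \<and> (\<forall>t. V t \<in> tangent (\<gamma> t)) \<and>
      (\<exists>V'. \<forall>t. (V has_vector_derivative V' t) (at t) \<and> (\<exists>k. V' t = k *\<^sub>R \<gamma> t)) \<and> V 1 = u'"
  then obtain \<gamma> \<gamma>' V where g: "geodesic c \<gamma> \<gamma>'" "\<gamma> 0 = p" "\<gamma>' 0 = w" and V: "V 0 = u" "V 1 = u'"
    and pf: "parfield \<gamma> V" by (auto simp: parfield_def)
  have "\<gamma> = geoG c p w" using geo_unique[OF c p w g] by auto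
  then have pf': "parfield (geoG c p w) V" using pf by simp
  have "V 1 = ptV c p w u 1"
    by (rule parfield_unique[OF c geoG_hyp[OF c p w] pf' ptV_par[OF c p w u]]) (simp add: V ptV_0)
  then show "u' = ptV c p w u 1" using V by simp
qed

lemma ptV_tangent:
  fixes p w u :: "real \<times> 'a::euclidean_space"
  assumes c: "c > 0" and p: "p \<in> hypK c" and w: "w \<in> tangent p" and u: "u \<in> tangent p"
  shows "ptV c p w u 1 \<in> tangent (geoG c p w 1)"
  using ptV_par[OF c p w u] by (simp add: parfield_def)

lemma ptV_norm:
  fixes p w u :: "real \<times> 'a::euclidean_space"
  assumes c: "c > 0" and p: "p \<in> hypK c" and w: "w \<in> tangent p" and u: "u \<in> tangent p"
  shows "mink (ptV c p w u 1) (ptV c p w u 1) = mink u u"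
  using parfield_norm[OF ptV_par[OF c p w u]] by (simp add: ptV_0)

lemma mink_geoG_p:
  fixes p w :: "real \<times> 'a::euclidean_space"
  assumes c: "c > 0" and p: "p \<in> hypK c" and w: "w \<in> tangent p"
  shows "mink (geoG c p w t) p = - (c^2) * cosh (lam c w * t)"
  using p w by (simp add: geoG_def hypK_def tangent_def mink_sym[of w p])

lemma mnorm_scale: "mnorm (a *\<^sub>R y) = \<bar>a\<bar> * mnorm y"
proof -
  have "mnorm (a *\<^sub>R y) = sqrt ((a*a) * mink y y)" by (simp add: mnorm_def mult.assoc)
  also have "\<dots> = sqrt (a*a) * sqrt (mink y y)" by (rule real_sqrt_mult)
  also have "\<dots> = \<bar>a\<bar> * mnorm y" by (simp only: real_sqrt_abs2 mnorm_def)
  finally show ?thesis .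
qed

lemma vel_alt: "vel c w = (c * tanh (mnorm w / c) / mnorm w) *\<^sub>R w"
  by (simp add: vel_def)

lemma vel_geo:
  fixes p w :: "real \<times> 'a::euclidean_space"
  assumes c: "c > 0" and p: "p \<in> hypK c" and w: "w \<in> tangent p"
  shows "vel c w = (1 / (- mink (geoG c p w 1) p / c^2)) *\<^sub>R geoG c p w 1 - p"
proof (cases "w = 0")
  case True then show ?thesis using c p by (simp add: vel_def geoG_def hypK_def)
next
  case False
  define L where "L = lam c w"
  have L: "L > 0" using lam_facts[OF c p w] False by (auto simp: L_def)
  have mn: "mnorm w = L * c" using c by (simp add: L_def lam_def)
  have C: "- mink (geoG c p w 1) p / c^2 = cosh L" using mink_geoG_p[OF c p w, of 1] c by (simp add: L_def)
  have "(1 / cosh L) *\<^sub>R geoG c p w 1 - p = (sinh L / (L * cosh L)) *\<^sub>R w"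
    unfolding geoG_def L_def[symmetric] using L
    by (simp add: scaleR_add_right scaleR_scaleR)
  moreover have "vel c w = (sinh L / (L * cosh L)) *\<^sub>R w"
    unfolding vel_alt mn using c L by (simp add: tanh_def)
  ultimately show ?thesis using C by simp
qed

lemma exp_inv_unique:
  fixes p w1 w2 :: "real \<times> 'a::euclidean_space"
  assumes c: "c > 0" and p: "p \<in> hypK c" and w1: "w1 \<in> tangent p" and w2: "w2 \<in> tangent p"
    and eq: "geoG c p w1 1 = geoG c p w2 1"
  shows "w1 = w2"
proof -
  have "mink (geoG c p w1 1) p = mink (geoG c p w2 1) p" using eq by simp
  then have "cosh (lam c w1) = cosh (lam c w2)" using mink_geoG_p[OF c p w1, of 1] mink_geoG_p[OF c p w2, of 1] c by simp
  then have LL: "lam c w1 = lam c w2" using lam_facts(1)[OF c p w1] lam_facts(1)[OF c p w2] by simp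
  show ?thesis
  proof (cases "lam c w1 = 0")
    case True then show ?thesis using LL lam_facts(3)[OF c p w1] lam_facts(3)[OF c p w2] by simp
  next
    case False
    then have "sinh (lam c w1) / lam c w1 \<noteq> 0" using lam_facts(1)[OF c p w1] by simp
    moreover have "(sinh (lam c w1) / lam c w1) *\<^sub>R w1 = (sinh (lam c w1) / lam c w1) *\<^sub>R w2"
      using eq LL by (simp add: geoG_def)
    ultimately show ?thesis by simp
  qed
qed

lemma exp_inv_exists:
  fixes p r :: "real \<times> 'a::euclidean_space"
  assumes c: "c > 0" and p: "p \<in> hypK c" and r: "r \<in> hypK c"
  shows "\<exists>w. w \<in> tangent p \<and> geoG c p w 1 = r"
proof -
  define C where "C = - mink r p / c^2"
  have C1: "C \<ge> 1" using reverse_cs[OF c p r] c by (simp add: C_def field_simps)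
  define y where "y = r - C *\<^sub>R p"
  have pp: "mink p p = -(c^2)" "mink r r = -(c^2)" using p r by (auto simp: hypK_def)
  have yt: "y \<in> tangent p" using c by (simp add: tangent_def y_def C_def pp mink_sym[of p r])
  have yy: "mink y y = c^2 * (C^2 - 1)"
    using c by (simp add: y_def pp mink_sym[of p r] C_def field_simps power2_eq_square)
  show ?thesis
  proof (cases "C = 1")
    case True
    then have "mink y y = 0" using yy by simp
    then have "y = 0" using tangent_zero[OF c p yt] by simp
    then have "r = p" using True by (simp add: y_def)
    then show ?thesis by (intro exI[of _ 0]) (simp add: tangent_def geoG_def)
  next
    case False
    then have C1': "C > 1" using C1 by simp
    define T where "T = arcosh C"
    have T: "T > 0" "cosh T = C" "sinh T = sqrt (C^2 - 1)" using C1' C1 by (auto simp: T_def sinh_arcosh_real)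
    have my: "mnorm y = c * sinh T" using yy c C1 T by (simp add: mnorm_def real_sqrt_mult)
    have myp: "mnorm y > 0" using my c T(1) by simp
    define w where "w = (c * T / mnorm y) *\<^sub>R y"
    have wt: "w \<in> tangent p" using yt by (simp add: w_def tangent_def)
    have "mnorm w = c * T" unfolding w_def using yy C1 c T myp
      by (subst mnorm_scale) (auto simp: abs_mult)
    then have lw: "lam c w = T" using c by (simp add: lam_def)
    have "geoG c p w 1 = C *\<^sub>R p + y"
      unfolding geoG_def lw mult_1_right using T myp my c one_less_power[OF C1', of 2] by (simp add: scaleR_scaleR w_def)
    also have "\<dots> = r" by (simp add: y_def)
    finally show ?thesis using wt by blast
  qed
qed



lemma einstein_decomp:
  fixes w1 w2 :: "real \<times> 'a::euclidean_space"
  shows "einstein_add c (t1 *\<^sub>R w1) (t2 *\<^sub>R w2) =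
    ((1 / (1 + t1 * t2 * mink w1 w2 / c^2)) * (t1 + (1 / c^2 * (lorentz_gamma c (t1 *\<^sub>R w1) / (1 + lorentz_gamma c (t1 *\<^sub>R w1))) * (t1 * t2 * mink w1 w2)) * t1)) *\<^sub>R w1
    + ((1 / (1 + t1 * t2 * mink w1 w2 / c^2)) * (1 / lorentz_gamma c (t1 *\<^sub>R w1)) * t2) *\<^sub>R w2"
  unfolding einstein_add_def
  by (simp add: scaleR_add_right scaleR_add_left scaleR_scaleR algebra_simps)

lemma gamma_eq:
  fixes w :: "real \<times> 'a::euclidean_space"
  assumes "c > 0" "mink w w = a^2 * c^2"
  shows "lorentz_gamma c ((tanh a / a) *\<^sub>R w) = cosh a"
proof -
  have "mink ((tanh a / a) *\<^sub>R w) ((tanh a / a) *\<^sub>R w) / c^2 = (tanh a)^2"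
    using assms by (cases "a = 0") (auto simp: power2_eq_square field_simps)
  moreover have "1 - (tanh a)^2 = 1 / (cosh a)^2"
  proof -
    have cp: "cosh a \<noteq> 0" using cosh_real_pos[of a] by linarith
    have "1 - (tanh a)^2 = ((cosh a)^2 - (sinh a)^2) / (cosh a)^2"
      using cp by (simp add: tanh_def power_divide field_simps)
    then show ?thesis using cosh_square_eq[of a] by simp
  qed
  ultimately show ?thesis by (simp add: lorentz_gamma_def real_sqrt_divide)
qed

lemma alg_beta:
  fixes a b c ca sa cb sb m :: real
  assumes "a > 0" "b > 0" "c > 0" "ca > 0" "cb > 0"
    and C: "C = ca * cb + (sb / b) * (m / (a^2 * c^2)) * (a * sa)" and "C > 0"
  shows "(sb / b) / C = (1 / (1 + (sa / ca / a) * (sb / cb / b) * m / c^2)) * (1 / ca) * (sb / cb / b)"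
proof -
  have D: "1 + (sa / ca / a) * (sb / cb / b) * m / c^2 = C / (ca * cb)"
    using assms by (simp add: C field_simps power2_eq_square)
  show ?thesis unfolding D using assms by (simp add: field_simps)
qed

lemma alg_alpha:
  fixes a b c ca sa cb sb m :: real
  assumes "a > 0" "b > 0" "c > 0" "ca > 0" "cb > 0" "ca^2 = sa^2 + 1"
    and C: "C = ca * cb + (sb / b) * (m / (a^2 * c^2)) * (a * sa)" and "C > 0"
  shows "(cb * sa / a + (sb / b) * (m / (a^2 * c^2)) * (ca - 1)) / C =
    (1 / (1 + (sa / ca / a) * (sb / cb / b) * m / c^2)) *
      ((sa / ca / a) + (1 / c^2 * (ca / (1 + ca)) * ((sa / ca / a) * (sb / cb / b) * m)) * (sa / ca / a))"
proof -
  have D: "1 + (sa / ca / a) * (sb / cb / b) * m / c^2 = C / (ca * cb)"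
    using assms by (simp add: C field_simps power2_eq_square)
  have s2: "sa * sa = (ca - 1) * (ca + 1)" using assms(6) by (simp add: power2_eq_square algebra_simps)
  have E1: "1 / c^2 * (ca / (1 + ca)) * ((sa / ca / a) * (sb / cb / b) * m) * (sa / ca / a)
      = (sb * m / (c^2 * a * a * cb * b * ca)) * (sa * sa / (1 + ca))"
    using assms by (simp add: field_simps)
  have E2: "sa * sa / (1 + ca) = ca - 1" using s2 assms(4) by (simp add: field_simps)
  have E: "(sa / ca / a) + (1 / c^2 * (ca / (1 + ca)) * ((sa / ca / a) * (sb / cb / b) * m)) * (sa / ca / a)
      = (sa / ca / a) + (sb * m / (c^2 * a * a * cb * b * ca)) * (ca - 1)"
    using E1 E2 by simp
  show ?thesis unfolding D E using assms by (simp add: field_simps power2_eq_square)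
qed



theorem mainTheorem4:
  fixes c :: real and p w1 w2 :: "real \<times> 'a::euclidean_space"
  assumes "c > 0" and "p \<in> hypK c" and "w1 \<in> tangent p" and "w2 \<in> tangent p"
  shows "vel c (oplusT c p w1 w2) = einstein_add c (vel c w1) (vel c w2)"
proof -
  note c = assms(1) and p = assms(2) and w1 = assms(3) and w2 = assms(4)
  define q where "q = geoG c p w1 1"
  have qe: "expK c p w1 = q" using expK_eq[OF c p w1] by (simp add: q_def)
  have qh: "q \<in> hypK c" using geoG_hyp[OF c p w1] by (simp add: q_def)
  define w2' where "w2' = ptV c p w1 w2 1"
  have we: "ptransp c p w1 w2 = w2'" using ptransp_eq[OF c p w1 w2] by (simp add: w2'_def)
  have w2't: "w2' \<in> tangent q" using ptV_tangent[OF c p w1 w2] by (simp add: w2'_def q_def)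
  define r where "r = geoG c q w2' 1"
  have re: "expK c q w2' = r" using expK_eq[OF c qh w2't] by (simp add: r_def)
  have rh: "r \<in> hypK c" using geoG_hyp[OF c qh w2't] by (simp add: r_def)
  have op: "oplusT c p w1 w2 = (THE w. w \<in> tangent p \<and> expK c p w = r)"
    by (simp add: oplusT_def Let_def qe we re)
  have ex1: "\<exists>!w. w \<in> tangent p \<and> expK c p w = r"
  proof -
    obtain w0 where "w0 \<in> tangent p" "geoG c p w0 1 = r" using exp_inv_exists[OF c p rh] by blast
    moreover have "\<And>w. w \<in> tangent p \<Longrightarrow> expK c p w = geoG c p w 1" using expK_eq[OF c p] by blast
    ultimately show ?thesis using exp_inv_unique[OF c p] by metis
  qed
  define W where "W = oplusT c p w1 w2"
  have W0: "W \<in> tangent p \<and> expK c p W = r"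
    using theI'[OF ex1] by (simp add: W_def op)
  have W: "W \<in> tangent p" "geoG c p W 1 = r"
    using W0 expK_eq[OF c p, of W] by auto
  have velW: "vel c W = (1 / (- mink r p / c^2)) *\<^sub>R r - p"
    using vel_geo[OF c p W(1)] W(2) by simp
  have ppm: "mink p p = -(c^2)" "mink p w1 = 0" "mink p w2 = 0"
    using p w1 w2 by (auto simp: hypK_def tangent_def)
  show ?thesis
  proof (cases "w1 = 0")
    case True
    have "q = p" by (simp add: q_def True)
    moreover have "w2' = w2" by (simp add: w2'_def ptV_def True)
    ultimately have "r = geoG c p w2 1" by (simp add: r_def)
    then have "vel c W = vel c w2" using velW vel_geo[OF c p w2] by simp
    then show ?thesis using True
      by (simp add: W_def vel_def einstein_add_def lorentz_gamma_def)
  next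
    case False
    note w1nz = False
    show ?thesis
    proof (cases "w2 = 0")
      case True
      have "w2' = 0" by (simp add: w2'_def ptV_def True)
      then have "r = q" by (simp add: r_def)
      then have "vel c W = vel c w1" using velW vel_geo[OF c p w1] by (simp add: q_def)
      then show ?thesis using True
        by (simp add: W_def vel_def einstein_add_def lorentz_gamma_def)
    next
      case False
      note w2nz = False
      define a where "a = lam c w1"
      define b where "b = lam c w2"
      have a: "a > 0" "mink w1 w1 = a^2 * c^2" using lam_facts[OF c p w1] w1nz by (auto simp: a_def)
      have b: "b > 0" "mink w2 w2 = b^2 * c^2" using lam_facts[OF c p w2] w2nz by (auto simp: b_def)
      have lb: "lam c w2' = b"
        using ptV_norm[OF c p w1 w2] by (simp add: w2'_def b_def lam_def mnorm_def)
      define m where "m = mink w2 w1"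
      have w2'e: "w2' = w2 + (m / (a^2 * c^2)) *\<^sub>R ((a * sinh a) *\<^sub>R p + (cosh a - 1) *\<^sub>R w1)"
        by (simp add: w2'_def ptV_def a_def[symmetric] m_def a(2))
      have qe2: "q = cosh a *\<^sub>R p + (sinh a / a) *\<^sub>R w1" by (simp add: q_def geoG_def a_def)
      have re2: "r = cosh b *\<^sub>R q + (sinh b / b) *\<^sub>R w2'" by (simp add: r_def geoG_def lb)
      define C where "C = cosh a * cosh b + (sinh b / b) * (m / (a^2 * c^2)) * (a * sinh a)"
      define A1 where "A1 = cosh b * sinh a / a + (sinh b / b) * (m / (a^2 * c^2)) * (cosh a - 1)"
      have mrp: "- mink r p / c^2 = C"
        unfolding re2 qe2 w2'e C_def using ppm c
        by (simp add: mink_sym[of w1 p] mink_sym[of w2 p] field_simps)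
      have Cpos: "C > 0" using reverse_cs[OF c p rh] mrp c
        by (smt (verit) divide_pos_pos zero_less_power)
      have rdec: "r = C *\<^sub>R p + A1 *\<^sub>R w1 + (sinh b / b) *\<^sub>R w2"
        unfolding re2 qe2 w2'e C_def A1_def
        by (simp add: scaleR_add_right scaleR_add_left scaleR_scaleR algebra_simps) (simp add: diff_divide_distrib scaleR_diff_left)
      have lhs: "vel c W = (A1 / C) *\<^sub>R w1 + ((sinh b / b) / C) *\<^sub>R w2"
      proof -
        have "vel c W = (1 / C) *\<^sub>R r - p" by (simp only: velW mrp)
        also have "\<dots> = (A1 / C) *\<^sub>R w1 + ((sinh b / b) / C) *\<^sub>R w2"
          unfolding rdec using Cpos by (simp add: scaleR_add_right scaleR_scaleR)
        finally show ?thesis .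
      qed
      have v1: "vel c w1 = (sinh a / cosh a / a) *\<^sub>R w1"
        unfolding vel_alt using c by (simp add: a_def lam_def tanh_def)
      have v2: "vel c w2 = (sinh b / cosh b / b) *\<^sub>R w2"
        unfolding vel_alt using c by (simp add: b_def lam_def tanh_def)
      have g: "lorentz_gamma c ((sinh a / cosh a / a) *\<^sub>R w1) = cosh a"
        using gamma_eq[OF c a(2)] by (simp add: tanh_def)
      have rhs: "einstein_add c (vel c w1) (vel c w2) =
        ((1 / (1 + (sinh a / cosh a / a) * (sinh b / cosh b / b) * m / c^2)) *
          ((sinh a / cosh a / a) + (1 / c^2 * (cosh a / (1 + cosh a)) * ((sinh a / cosh a / a) * (sinh b / cosh b / b) * m)) * (sinh a / cosh a / a))) *\<^sub>R w1
        + ((1 / (1 + (sinh a / cosh a / a) * (sinh b / cosh b / b) * m / c^2)) * (1 / cosh a) * (sinh b / cosh b / b)) *\<^sub>R w2"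
        unfolding v1 v2 einstein_decomp g by (simp add: m_def mink_sym[of w1 w2])
      have al: "A1 / C = (1 / (1 + (sinh a / cosh a / a) * (sinh b / cosh b / b) * m / c^2)) *
          ((sinh a / cosh a / a) + (1 / c^2 * (cosh a / (1 + cosh a)) * ((sinh a / cosh a / a) * (sinh b / cosh b / b) * m)) * (sinh a / cosh a / a))"
        unfolding A1_def by (rule alg_alpha[OF a(1) b(1) c cosh_real_pos cosh_real_pos cosh_square_eq C_def Cpos])
      have be: "(sinh b / b) / C = (1 / (1 + (sinh a / cosh a / a) * (sinh b / cosh b / b) * m / c^2)) * (1 / cosh a) * (sinh b / cosh b / b)"
        by (rule alg_beta[OF a(1) b(1) c cosh_real_pos cosh_real_pos C_def Cpos])
      show ?thesis unfolding W_def[symmetric] lhs rhs al be ..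
    qed
  qed
qed


end
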